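(* Let $Y_i=\kappa_i\mu_{0,i}+n^{-1/2}Z_i$, $i\ge1$, with $Z_i$ i.i.d. standard normal, $\mu_0\in\ell_2$, and $(\kappa_i)$ satisfying $C^{-1}i^{-p}\le\kappa_i\le Ci^{-p}$ for some $p\ge0$, $C\ge1$. Define \[ \mathbb{M}_n(\alpha)=\sum_{i=1}^{\infty}\frac{n\log i}{i^{1+2\alpha}\kappa_i^{-2}+n}-\sum_{i=1}^{\infty}\frac{n^2i^{1+2\alpha}\kappa_i^{-2}\log i}{(i^{1+2\alpha}\kappa_i^{-2}+n)^2}Y_i^2 \] and \[ h_n(\alpha)=\frac{1+2\alpha+2p}{n^{1/(1+2\alpha+2p)}\log n}\sum_{i=1}^{\infty}\frac{n^2 i^{1+2\alpha}\mu_{0,i}^2\log i}{(i^{1+2\alpha}\kappa_i^{-2}+n)^2}. \] Then for any $\alpha>0$, \[ \operatorname{var}_0\frac{(1+2\alpha+2p)\mathbb{M}_n(\alpha)}{n^{1/(1+2\alpha+2p)}}\lesssim n^{-1/(1+2\alpha+2p)}(\log n)^2\big(1+h_n(\alpha)\big), \] with an implicit constant that does not depend on $\mu_0$ and $\alpha$.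
   Context: $\operatorname{var}_0$ is the variance under the law of $Y$ with true parameter $\mu_0$. $a\lesssim b$ means $a\le Kb$ for a constant $K>0$. $\mathbb{M}_n$ is the derivative of the marginal log-likelihood of $\alpha$. *)

theory Defs
  imports "HOL-Probability.Probability"
begin

text \<open>Sequences are indexed by nat; only indices i \<ge> 1 are used (index 0 is ignored).
  Sums over i \<ge> 1 are written as suminf over k with i = Suc k.\<close>

definition Yobs :: "(nat \<Rightarrow> real) \<Rightarrow> (nat \<Rightarrow> real) \<Rightarrow> nat \<Rightarrow> (nat \<Rightarrow> 'a \<Rightarrow> real) \<Rightarrow> nat \<Rightarrow> 'a \<Rightarrow> real" where
  "Yobs \<kappa> \<mu>0 n Z i \<omega> = \<kappa> i * \<mu>0 i + Z i \<omega> / sqrt (real n)"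

definition Mn :: "(nat \<Rightarrow> real) \<Rightarrow> nat \<Rightarrow> real \<Rightarrow> (nat \<Rightarrow> real) \<Rightarrow> real" where
  "Mn \<kappa> n \<alpha> Y =
     (\<Sum>k. let i = real (Suc k) in
        real n * ln i / (i powr (1 + 2*\<alpha>) * \<kappa> (Suc k) powr (-2) + real n))
   - (\<Sum>k. let i = real (Suc k) in
        (real n)^2 * i powr (1 + 2*\<alpha>) * \<kappa> (Suc k) powr (-2) * ln i
          / (i powr (1 + 2*\<alpha>) * \<kappa> (Suc k) powr (-2) + real n)^2 * (Y (Suc k))^2)"

definition hn :: "(nat \<Rightarrow> real) \<Rightarrow> real \<Rightarrow> (nat \<Rightarrow> real) \<Rightarrow> nat \<Rightarrow> real \<Rightarrow> real" where
  "hn \<kappa> p \<mu>0 n \<alpha> =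
     (1 + 2*\<alpha> + 2*p) / (real n powr (1 / (1 + 2*\<alpha> + 2*p)) * ln (real n)) *
     (\<Sum>k. let i = real (Suc k) in
        (real n)^2 * i powr (1 + 2*\<alpha>) * (\<mu>0 (Suc k))^2 * ln i
          / (i powr (1 + 2*\<alpha>) * \<kappa> (Suc k) powr (-2) + real n)^2)"

end

theory Submission
  imports Defs "HOL-Analysis.Analysis"
begin

lemma gauss_mom:
  assumes "prob_space M" "distributed M lborel G std_normal_density"
  shows "integrable M (\<lambda>\<omega>. G \<omega> ^ k)"
    and "(\<integral>\<omega>. G \<omega> ^ k \<partial>M) = (\<integral>x. std_normal_density x * x^k \<partial>lborel)"
proof -
  have "integrable lborel (\<lambda>x. std_normal_density x * x^k)" by (rule integrable_std_normal_moment)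
  then show "integrable M (\<lambda>\<omega>. G \<omega> ^ k)"
    using distributed_integrable[OF assms(2), of "\<lambda>x. x^k"] by simp
  show "(\<integral>\<omega>. G \<omega> ^ k \<partial>M) = (\<integral>x. std_normal_density x * x^k \<partial>lborel)"
    using distributed_integral[OF assms(2), of "\<lambda>x. x^k"] by simp
qed

lemma gauss_mom_vals:
  assumes "prob_space M" "distributed M lborel G std_normal_density"
  shows "(\<integral>\<omega>. G \<omega> ^ 1 \<partial>M) = 0" "(\<integral>\<omega>. G \<omega> ^ 2 \<partial>M) = 1"
    "(\<integral>\<omega>. G \<omega> ^ 3 \<partial>M) = 0" "(\<integral>\<omega>. G \<omega> ^ 4 \<partial>M) = 3"
      "(\<integral>\<omega>. G \<omega> ^ 0 \<partial>M) = 1"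
proof -
  show "(\<integral>\<omega>. G \<omega> ^ 1 \<partial>M) = 0"
    using gauss_mom(2)[OF assms, of 1] integral_std_normal_moment_odd[of 0] by simp
  show "(\<integral>\<omega>. G \<omega> ^ 3 \<partial>M) = 0"
    using gauss_mom(2)[OF assms, of 3] integral_std_normal_moment_odd[of 1] by simp
  show "(\<integral>\<omega>. G \<omega> ^ 2 \<partial>M) = 1"
    using gauss_mom(2)[OF assms, of 2] integral_std_normal_moment_even[of 1] by simp
  show "(\<integral>\<omega>. G \<omega> ^ 4 \<partial>M) = 3"
    using gauss_mom(2)[OF assms, of 4] integral_std_normal_moment_even[of 2] by (simp add: fact_numeral)
  show "(\<integral>\<omega>. G \<omega> ^ 0 \<partial>M) = 1"
    using assms(1) by (simp add: prob_space.prob_space)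
qed

lemma poly_int:
  assumes "prob_space M" "distributed M lborel G std_normal_density"
  shows "integrable M (\<lambda>\<omega>. \<Sum>j<5. c j * G \<omega> ^ j)"
    "(\<integral>\<omega>. (\<Sum>j<5. c j * G \<omega> ^ j) \<partial>M) = c 0 + c 2 + 3 * c 4"
proof -
  have I: "integrable M (\<lambda>\<omega>. c j * G \<omega> ^ j)" for j
    using gauss_mom(1)[OF assms, of j] by simp
  show "integrable M (\<lambda>\<omega>. \<Sum>j<5. c j * G \<omega> ^ j)" using I by auto
  have "(\<integral>\<omega>. (\<Sum>j<5. c j * G \<omega> ^ j) \<partial>M) = (\<Sum>j<5. c j * (\<integral>\<omega>. G \<omega> ^ j \<partial>M))"
    using I Bochner_Integration.integral_sum[where I="{..<5}" and f="\<lambda>j \<omega>. c j * G \<omega> ^ j"] by simp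
  also have "\<dots> = c 0 + c 2 + 3 * c 4"
    using gauss_mom_vals[OF assms] by (simp add: eval_nat_numeral)
  finally show "(\<integral>\<omega>. (\<Sum>j<5. c j * G \<omega> ^ j) \<partial>M) = c 0 + c 2 + 3 * c 4" .
qed

lemma D_facts:
  assumes "prob_space M" "distributed M lborel G std_normal_density" "t \<noteq> 0"
  shows "integrable M (\<lambda>\<omega>. (a + G \<omega> / t)\<^sup>2)"
    "(\<integral>\<omega>. (a + G \<omega> / t)\<^sup>2 \<partial>M) = a\<^sup>2 + 1/t\<^sup>2"
    "integrable M (\<lambda>\<omega>. ((a + G \<omega> / t)\<^sup>2 - (a\<^sup>2 + 1/t\<^sup>2)))"
    "(\<integral>\<omega>. ((a + G \<omega> / t)\<^sup>2 - (a\<^sup>2 + 1/t\<^sup>2)) \<partial>M) = 0"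
    "integrable M (\<lambda>\<omega>. ((a + G \<omega> / t)\<^sup>2 - (a\<^sup>2 + 1/t\<^sup>2))\<^sup>2)"
    "(\<integral>\<omega>. ((a + G \<omega> / t)\<^sup>2 - (a\<^sup>2 + 1/t\<^sup>2))\<^sup>2 \<partial>M) = 4*a\<^sup>2/t\<^sup>2 + 2/t^4"
proof -
  define c1 where "c1 = (\<lambda>j::nat. if j = 0 then a\<^sup>2 else if j = 1 then 2*a/t else if j = 2 then 1/t\<^sup>2 else 0)"
  define c2 where "c2 = (\<lambda>j::nat. if j = 0 then 0 else if j = 1 then 2*a/t else if j = 2 then 1/t\<^sup>2 else 0) - (\<lambda>j. if j = 0 then 1/t\<^sup>2 else 0)"
  define c3 where "c3 = (\<lambda>j::nat. if j = 0 then (1/t\<^sup>2)\<^sup>2 else if j = 1 then - 2*(2*a/t)*(1/t\<^sup>2)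
     else if j = 2 then (2*a/t)\<^sup>2 - 2*(1/t\<^sup>2)\<^sup>2 else if j = 3 then 2*(2*a/t)*(1/t\<^sup>2) else if j = 4 then (1/t\<^sup>2)\<^sup>2 else 0)"
  have e1: "(\<lambda>\<omega>. (a + G \<omega> / t)\<^sup>2) = (\<lambda>\<omega>. \<Sum>j<5. c1 j * G \<omega> ^ j)"
    using assms(3) by (intro ext) (simp add: c1_def eval_nat_numeral field_simps power2_eq_square)
  have e2: "(\<lambda>\<omega>. ((a + G \<omega> / t)\<^sup>2 - (a\<^sup>2 + 1/t\<^sup>2))) = (\<lambda>\<omega>. \<Sum>j<5. c2 j * G \<omega> ^ j)"
    using assms(3) by (intro ext) (simp add: c2_def eval_nat_numeral field_simps power2_eq_square)
  have e3: "(\<lambda>\<omega>. ((a + G \<omega> / t)\<^sup>2 - (a\<^sup>2 + 1/t\<^sup>2))\<^sup>2) = (\<lambda>\<omega>. \<Sum>j<5. c3 j * G \<omega> ^ j)"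
    using assms(3) by (intro ext) (simp add: c3_def eval_nat_numeral field_simps power2_eq_square)
  show "integrable M (\<lambda>\<omega>. (a + G \<omega> / t)\<^sup>2)" unfolding e1 by (rule poly_int(1)[OF assms(1,2)])
  show "(\<integral>\<omega>. (a + G \<omega> / t)\<^sup>2 \<partial>M) = a\<^sup>2 + 1/t\<^sup>2" unfolding e1 poly_int(2)[OF assms(1,2)]
    by (simp add: c1_def)
  show "integrable M (\<lambda>\<omega>. ((a + G \<omega> / t)\<^sup>2 - (a\<^sup>2 + 1/t\<^sup>2)))" unfolding e2 by (rule poly_int(1)[OF assms(1,2)])
  show "(\<integral>\<omega>. ((a + G \<omega> / t)\<^sup>2 - (a\<^sup>2 + 1/t\<^sup>2)) \<partial>M) = 0" unfolding e2 poly_int(2)[OF assms(1,2)]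
    by (simp add: c2_def)
  show "integrable M (\<lambda>\<omega>. ((a + G \<omega> / t)\<^sup>2 - (a\<^sup>2 + 1/t\<^sup>2))\<^sup>2)" unfolding e3 by (rule poly_int(1)[OF assms(1,2)])
  show "(\<integral>\<omega>. ((a + G \<omega> / t)\<^sup>2 - (a\<^sup>2 + 1/t\<^sup>2))\<^sup>2 \<partial>M) = 4*a\<^sup>2/t\<^sup>2 + 2/t^4" unfolding e3 poly_int(2)[OF assms(1,2)]
    using assms(3) by (simp add: c3_def field_simps power2_eq_square eval_nat_numeral)
qed

lemma Zmeas: assumes "distributed M lborel G std_normal_density" shows "G \<in> borel_measurable M"
  using distributed_measurable[OF assms] by simp

lemma indep_D:
  assumes M: "prob_space M" and ind: "prob_space.indep_vars M (\<lambda>_. borel) Z {1..}"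
  and dist: "\<forall>i\<ge>1. distributed M lborel (Z i) std_normal_density" and t: "t\<noteq>0" and jk: "j \<noteq> k"
  shows "integrable M (\<lambda>\<omega>. ((a j + Z (Suc j) \<omega> / t)\<^sup>2 - ((a j)\<^sup>2 + 1/t\<^sup>2)) * ((a k + Z (Suc k) \<omega> / t)\<^sup>2 - ((a k)\<^sup>2 + 1/t\<^sup>2)))"
    "(\<integral>\<omega>. ((a j + Z (Suc j) \<omega> / t)\<^sup>2 - ((a j)\<^sup>2 + 1/t\<^sup>2)) * ((a k + Z (Suc k) \<omega> / t)\<^sup>2 - ((a k)\<^sup>2 + 1/t\<^sup>2)) \<partial>M) = 0"
proof -
  interpret prob_space M by fact
  define Y where "Y = (\<lambda>i x. (a (i - 1) + x / t)\<^sup>2 - ((a (i-1))\<^sup>2 + 1/t\<^sup>2))"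
  have "indep_vars (\<lambda>_. borel) (\<lambda>i \<omega>. Y i (Z i \<omega>)) {1..}"
    by (rule indep_vars_compose2[OF ind]) (simp add: Y_def)
  then have I2: "indep_vars (\<lambda>_. borel) (\<lambda>i \<omega>. Y i (Z i \<omega>)) {Suc j, Suc k}"
    by (rule indep_vars_subset) auto
  have int: "integrable M (\<lambda>\<omega>. Y i (Z i \<omega>))" if "i \<in> {Suc j, Suc k}" for i
    using that D_facts(3)[OF M _ t] dist by (auto simp: Y_def)
  have int0: "(\<integral>\<omega>. Y i (Z i \<omega>) \<partial>M) = 0" if "i \<in> {Suc j, Suc k}" for i
    using that D_facts(4)[OF M _ t] dist by (auto simp: Y_def)
  have pe: "(\<lambda>\<omega>. \<Prod>i\<in>{Suc j, Suc k}. Y i (Z i \<omega>)) = (\<lambda>\<omega>. ((a j + Z (Suc j) \<omega> / t)\<^sup>2 - ((a j)\<^sup>2 + 1/t\<^sup>2)) * ((a k + Z (Suc k) \<omega> / t)\<^sup>2 - ((a k)\<^sup>2 + 1/t\<^sup>2)))"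
    using jk by (simp add: Y_def)
  show "integrable M (\<lambda>\<omega>. ((a j + Z (Suc j) \<omega> / t)\<^sup>2 - ((a j)\<^sup>2 + 1/t\<^sup>2)) * ((a k + Z (Suc k) \<omega> / t)\<^sup>2 - ((a k)\<^sup>2 + 1/t\<^sup>2)))"
    using indep_vars_integrable[OF _ I2 int] pe by simp
  have "(\<integral>\<omega>. (\<Prod>i\<in>{Suc j, Suc k}. Y i (Z i \<omega>)) \<partial>M) = (\<Prod>i\<in>{Suc j, Suc k}. (\<integral>\<omega>. Y i (Z i \<omega>) \<partial>M))"
    using indep_vars_lebesgue_integral[OF _ I2 int] by simp
  also have "\<dots> = 0" using int0 jk by simp
  finally show "(\<integral>\<omega>. ((a j + Z (Suc j) \<omega> / t)\<^sup>2 - ((a j)\<^sup>2 + 1/t\<^sup>2)) * ((a k + Z (Suc k) \<omega> / t)\<^sup>2 - ((a k)\<^sup>2 + 1/t\<^sup>2)) \<partial>M) = 0"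
    using pe by simp
qed

lemma fin_sum:
  assumes M: "prob_space M" and ind: "prob_space.indep_vars M (\<lambda>_. borel) Z {1..}"
  and dist: "\<forall>i\<ge>1. distributed M lborel (Z i) std_normal_density" and t: "t\<noteq>0"
  shows "integrable M (\<lambda>\<omega>. (\<Sum>k<N. w k * ((a k + Z (Suc k) \<omega> / t)\<^sup>2 - ((a k)\<^sup>2 + 1/t\<^sup>2)))\<^sup>2)"
   "(\<integral>\<omega>. (\<Sum>k<N. w k * ((a k + Z (Suc k) \<omega> / t)\<^sup>2 - ((a k)\<^sup>2 + 1/t\<^sup>2)))\<^sup>2 \<partial>M)
      = (\<Sum>k<N. (w k)\<^sup>2 * (4*(a k)\<^sup>2/t\<^sup>2 + 2/t^4))"
proof -
  define Dd where "Dd = (\<lambda>k \<omega>. (a k + Z (Suc k) \<omega> / t)\<^sup>2 - ((a k)\<^sup>2 + 1/t\<^sup>2))"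
  have sq: "(\<lambda>\<omega>. (\<Sum>k<N. w k * Dd k \<omega>)\<^sup>2) = (\<lambda>\<omega>. \<Sum>j<N. \<Sum>k<N. (w j * w k) * (Dd j \<omega> * Dd k \<omega>))"
    by (rule ext) (simp add: power2_eq_square sum_product mult_ac)
  have ip: "integrable M (\<lambda>\<omega>. (w j * w k) * (Dd j \<omega> * Dd k \<omega>))" for j k
  proof (cases "j = k")
    case True
    then show ?thesis using D_facts(5)[OF M _ t, of "Z (Suc k)" "a k"] dist
      by (simp add: Dd_def power2_eq_square)
  next
    case False
    then show ?thesis using indep_D(1)[OF M ind dist t False, of a] by (simp add: Dd_def)
  qed
  have iv: "(\<integral>\<omega>. (w j * w k) * (Dd j \<omega> * Dd k \<omega>) \<partial>M) = (if j = k then (w k)\<^sup>2 * (4*(a k)\<^sup>2/t\<^sup>2 + 2/t^4) else 0)" for j k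
  proof (cases "j = k")
    case True
    then show ?thesis using D_facts(6)[OF M _ t, of "Z (Suc k)" "a k"] dist
      by (simp add: Dd_def power2_eq_square)
  next
    case False
    then show ?thesis using indep_D(2)[OF M ind dist t False, of a] by (simp add: Dd_def)
  qed
  have ii: "integrable M (\<lambda>\<omega>. \<Sum>k<N. (w j * w k) * (Dd j \<omega> * Dd k \<omega>))" for j
    using ip by auto
  show "integrable M (\<lambda>\<omega>. (\<Sum>k<N. w k * ((a k + Z (Suc k) \<omega> / t)\<^sup>2 - ((a k)\<^sup>2 + 1/t\<^sup>2)))\<^sup>2)"
    using ii sq unfolding Dd_def by auto
  have "(\<integral>\<omega>. (\<Sum>k<N. w k * Dd k \<omega>)\<^sup>2 \<partial>M) = (\<Sum>j<N. \<integral>\<omega>. (\<Sum>k<N. (w j * w k) * (Dd j \<omega> * Dd k \<omega>)) \<partial>M)"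
    unfolding sq by (rule Bochner_Integration.integral_sum) (rule ii)
  also have "\<dots> = (\<Sum>j<N. \<Sum>k<N. (\<integral>\<omega>. (w j * w k) * (Dd j \<omega> * Dd k \<omega>) \<partial>M))"
    by (intro sum.cong refl Bochner_Integration.integral_sum ip)
  also have "\<dots> = (\<Sum>k<N. (w k)\<^sup>2 * (4*(a k)\<^sup>2/t\<^sup>2 + 2/t^4))"
    unfolding iv by (simp add: sum.delta)
  finally show "(\<integral>\<omega>. (\<Sum>k<N. w k * ((a k + Z (Suc k) \<omega> / t)\<^sup>2 - ((a k)\<^sup>2 + 1/t\<^sup>2)))\<^sup>2 \<partial>M)
      = (\<Sum>k<N. (w k)\<^sup>2 * (4*(a k)\<^sup>2/t\<^sup>2 + 2/t^4))" unfolding Dd_def .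
qed

lemma main_prob:
  assumes M: "prob_space M" and ind: "prob_space.indep_vars M (\<lambda>_. borel) Z {1..}"
  and dist: "\<forall>i\<ge>1. distributed M lborel (Z i) std_normal_density" and t: "t\<noteq>0"
  and w: "\<And>k. w k \<ge> 0"
  and s1: "summable (\<lambda>k. w k * ((a k)\<^sup>2 + 1/t\<^sup>2))"
  and s2: "summable (\<lambda>k. (w k)\<^sup>2 * (4*(a k)\<^sup>2/t\<^sup>2 + 2/t^4))"
  shows "(\<integral>\<omega>. ((\<Sum>k. w k * (a k + Z (Suc k) \<omega> / t)\<^sup>2) - (\<Sum>k. w k * ((a k)\<^sup>2 + 1/t\<^sup>2)))\<^sup>2 \<partial>M)
     \<le> (\<Sum>k. (w k)\<^sup>2 * (4*(a k)\<^sup>2/t\<^sup>2 + 2/t^4))"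
proof -
  interpret prob_space M by fact
  define g where "g = (\<lambda>k \<omega>. w k * (a k + Z (Suc k) \<omega> / t)\<^sup>2)"
  define m where "m = (\<lambda>k. w k * ((a k)\<^sup>2 + 1/t\<^sup>2))"
  define v where "v = (\<lambda>k. (w k)\<^sup>2 * (4*(a k)\<^sup>2/t\<^sup>2 + 2/t^4))"
  define P where "P = (\<lambda>N \<omega>. \<Sum>k<N. w k * ((a k + Z (Suc k) \<omega> / t)\<^sup>2 - ((a k)\<^sup>2 + 1/t\<^sup>2)))"
  have Zm[measurable]: "Z (Suc k) \<in> borel_measurable M" for k
    using dist Zmeas by auto
  have gm[measurable]: "g k \<in> borel_measurable M" for k unfolding g_def by measurable
  have g0: "g k \<omega> \<ge> 0" for k \<omega> unfolding g_def using w by simp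
  have gi: "integrable M (g k)" for k
    unfolding g_def using D_facts(1)[OF M _ t, of "Z (Suc k)" "a k"] dist by simp
  have gI: "(\<integral>\<omega>. g k \<omega> \<partial>M) = m k" for k
    unfolding g_def m_def using D_facts(2)[OF M _ t, of "Z (Suc k)" "a k"] dist by simp
  have m0: "m k \<ge> 0" for k unfolding m_def using w by simp
  have v0: "v k \<ge> 0" for k unfolding v_def by simp
  have "(\<integral>\<^sup>+\<omega>. (\<Sum>k. ennreal (g k \<omega>)) \<partial>M) = (\<Sum>k. \<integral>\<^sup>+\<omega>. ennreal (g k \<omega>) \<partial>M)"
    by (rule nn_integral_suminf) simp
  also have "\<dots> = (\<Sum>k. ennreal (m k))"
    using nn_integral_eq_integral[OF gi] g0 gI by simp
  also have "\<dots> = ennreal (\<Sum>k. m k)" using suminf_ennreal2[OF m0] s1 unfolding m_def by auto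
  finally have "(\<integral>\<^sup>+\<omega>. (\<Sum>k. ennreal (g k \<omega>)) \<partial>M) \<noteq> \<infinity>" by simp
  then have "AE \<omega> in M. (\<Sum>k. ennreal (g k \<omega>)) \<noteq> \<infinity>"
    by (intro nn_integral_noteq_infinite) simp
  then have AEs: "AE \<omega> in M. summable (\<lambda>k. g k \<omega>)"
    by eventually_elim (rule summable_suminf_not_top[OF g0], simp)
  have sm: "summable m" using s1 unfolding m_def .
  have conv: "AE \<omega> in M. (\<lambda>N. ennreal ((P N \<omega>)\<^sup>2)) \<longlonglongrightarrow> ennreal (((\<Sum>k. g k \<omega>) - (\<Sum>k. m k))\<^sup>2)"
    using AEs
  proof eventually_elim
    case (elim \<omega>)
    have "P N \<omega> = (\<Sum>k<N. g k \<omega>) - (\<Sum>k<N. m k)" for N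
      unfolding P_def g_def m_def by (simp add: sum_subtractf[symmetric] algebra_simps)
    moreover have "(\<lambda>N. (\<Sum>k<N. g k \<omega>) - (\<Sum>k<N. m k)) \<longlonglongrightarrow> (\<Sum>k. g k \<omega>) - (\<Sum>k. m k)"
      by (intro tendsto_diff summable_LIMSEQ elim sm)
    ultimately have "(\<lambda>N. P N \<omega>) \<longlonglongrightarrow> (\<Sum>k. g k \<omega>) - (\<Sum>k. m k)" by simp
    then show ?case by (intro tendsto_ennrealI tendsto_power)
  qed
  have Pm[measurable]: "P N \<in> borel_measurable M" for N unfolding P_def by measurable
  have "(\<integral>\<^sup>+\<omega>. ennreal (((\<Sum>k. g k \<omega>) - (\<Sum>k. m k))\<^sup>2) \<partial>M)
       = (\<integral>\<^sup>+\<omega>. liminf (\<lambda>N. ennreal ((P N \<omega>)\<^sup>2)) \<partial>M)"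
    using conv by (intro nn_integral_cong_AE, eventually_elim) (rule lim_imp_Liminf[symmetric], simp_all)
  also have "\<dots> \<le> liminf (\<lambda>N. \<integral>\<^sup>+\<omega>. ennreal ((P N \<omega>)\<^sup>2) \<partial>M)"
    by (rule nn_integral_liminf) simp
  also have "\<dots> \<le> ennreal (\<Sum>k. v k)"
  proof -
    have "(\<integral>\<^sup>+\<omega>. ennreal ((P N \<omega>)\<^sup>2) \<partial>M) \<le> ennreal (\<Sum>k. v k)" for N
    proof -
      have "(\<integral>\<^sup>+\<omega>. ennreal ((P N \<omega>)\<^sup>2) \<partial>M) = ennreal (\<Sum>k<N. v k)"
        using nn_integral_eq_integral[OF fin_sum(1)[OF M ind dist t, where N=N and w=w and a=a]] fin_sum(2)[OF M ind dist t, where N=N and w=w and a=a]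
        unfolding P_def v_def by simp
      also have "\<dots> \<le> ennreal (\<Sum>k. v k)"
        using sum_le_suminf[of v "{..<N}"] s2 v0 unfolding v_def by (auto intro!: ennreal_leI)
      finally show ?thesis .
    qed
    then have "limsup (\<lambda>N. \<integral>\<^sup>+\<omega>. ennreal ((P N \<omega>)\<^sup>2) \<partial>M) \<le> ennreal (\<Sum>k. v k)"
      by (intro Limsup_bounded) auto
    then show ?thesis using Liminf_le_Limsup[of sequentially] order_trans by auto
  qed
  finally have "(\<integral>\<omega>. ((\<Sum>k. g k \<omega>) - (\<Sum>k. m k))\<^sup>2 \<partial>M) \<le> (\<Sum>k. v k)"
    by (intro integral_real_bounded suminf_nonneg) (auto simp: s2 v_def)
  then show ?thesis unfolding g_def m_def v_def .
qed

lemma var_le: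
  fixes X :: "'a \<Rightarrow> real"
  assumes M: "prob_space M" and X[measurable]: "X \<in> borel_measurable M"
  shows "(\<integral>\<omega>. (X \<omega> - (\<integral>\<omega>'. X \<omega>' \<partial>M))\<^sup>2 \<partial>M) \<le> (\<integral>\<omega>. (X \<omega> - d)\<^sup>2 \<partial>M)"
proof -
  interpret prob_space M by fact
  define \<mu> where "\<mu> = (\<integral>\<omega>'. X \<omega>' \<partial>M)"
  show ?thesis
  proof (cases "integrable M (\<lambda>\<omega>. (X \<omega> - d)\<^sup>2)")
    case True
    then have i1: "integrable M (\<lambda>\<omega>. X \<omega> - d)"
      using square_integrable_imp_integrable[of "\<lambda>\<omega>. X \<omega> - d"] by simp
    then have iX: "integrable M X"
      using Bochner_Integration.integrable_add[OF i1, of "\<lambda>_. d"] by simp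
    have e: "(\<lambda>\<omega>. (X \<omega> - \<mu>)\<^sup>2) = (\<lambda>\<omega>. (X \<omega> - d)\<^sup>2 + (2*(d-\<mu>) * (X \<omega> - d) + (d-\<mu>)\<^sup>2))"
      by (rule ext) (simp add: power2_eq_square algebra_simps)
    have "(\<integral>\<omega>. (X \<omega> - \<mu>)\<^sup>2 \<partial>M) = (\<integral>\<omega>. (X \<omega> - d)\<^sup>2 \<partial>M) + (2*(d-\<mu>) * (\<integral>\<omega>. (X \<omega> - d) \<partial>M) + (d-\<mu>)\<^sup>2)"
      unfolding e using True i1 by (simp add: Bochner_Integration.integral_add prob_space)
    also have "(\<integral>\<omega>. (X \<omega> - d) \<partial>M) = \<mu> - d"
      using iX by (simp add: \<mu>_def prob_space)
    finally have "(\<integral>\<omega>. (X \<omega> - \<mu>)\<^sup>2 \<partial>M) = (\<integral>\<omega>. (X \<omega> - d)\<^sup>2 \<partial>M) - (d - \<mu>)\<^sup>2"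
      by (simp add: power2_eq_square algebra_simps)
    then show ?thesis unfolding \<mu>_def[symmetric] by simp
  next
    case False
    have "\<not> integrable M (\<lambda>\<omega>. (X \<omega> - \<mu>)\<^sup>2)"
    proof
      assume a: "integrable M (\<lambda>\<omega>. (X \<omega> - \<mu>)\<^sup>2)"
      have "integrable M (\<lambda>\<omega>. 2 * (X \<omega> - \<mu>)\<^sup>2 + 2 * (\<mu> - d)\<^sup>2)"
        using a by simp
      then have "integrable M (\<lambda>\<omega>. (X \<omega> - d)\<^sup>2)"
      proof (rule Bochner_Integration.integrable_bound)
        show "AE x in M. norm ((X x - d)\<^sup>2) \<le> norm (2 * (X x - \<mu>)\<^sup>2 + 2 * (\<mu> - d)\<^sup>2)"
        proof (intro AE_I2)
          fix x
          have "(X x - d)\<^sup>2 \<le> 2 * (X x - \<mu>)\<^sup>2 + 2 * (\<mu> - d)\<^sup>2"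
          proof -
            have "(X x - d)\<^sup>2 = (X x-\<mu>)\<^sup>2 + 2*(X x-\<mu>)*(\<mu>-d) + (\<mu>-d)\<^sup>2"
              by (simp add: power2_eq_square algebra_simps)
            then show ?thesis using sum_squares_bound[of "X x - \<mu>" "\<mu> - d"] by linarith
          qed
          then show "norm ((X x - d)\<^sup>2) \<le> norm (2 * (X x - \<mu>)\<^sup>2 + 2 * (\<mu> - d)\<^sup>2)" by simp
        qed
      qed simp
      then show False using False by simp
    qed
    then have "(\<integral>\<omega>. (X \<omega> - \<mu>)\<^sup>2 \<partial>M) = 0" by (rule not_integrable_integral_eq)
    then show ?thesis unfolding \<mu>_def[symmetric] by simp
  qed
qed

lemma mvt_step:
  fixes x \<gamma> :: real
  assumes x: "x > 0" and g: "\<gamma> > 1"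
  shows "(\<gamma>-1) * (x+1) powr (-\<gamma>) \<le> x powr (1-\<gamma>) - (x+1) powr (1-\<gamma>)"
proof -
  have "\<exists>z. x < z \<and> z < x+1 \<and> ((x+1) powr (1-\<gamma>) - x powr (1-\<gamma>) = ((x+1) - x) * ((1-\<gamma>) * z powr (1-\<gamma>-1)))"
  proof (rule MVT2)
    fix y assume "x \<le> y" "y \<le> x+1"
    then have "y > 0" using x by simp
    then show "((\<lambda>a. a powr (1 - \<gamma>)) has_real_derivative (1 - \<gamma>) * y powr (1-\<gamma>-1)) (at y)"
      by (rule has_real_derivative_powr)
  qed simp
  then obtain z where z: "x < z" "z < x+1" "(x+1) powr (1-\<gamma>) - x powr (1-\<gamma>) = (1-\<gamma>) * z powr (-\<gamma>)"
    by auto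
  have "(x+1) powr (-\<gamma>) \<le> z powr (-\<gamma>)"
    using z x g by (intro powr_mono2') auto
  then have "(\<gamma>-1) * (x+1) powr (-\<gamma>) \<le> (\<gamma>-1) * z powr (-\<gamma>)"
    using g by (intro mult_left_mono) auto
  then show ?thesis using z g by (simp add: algebra_simps)
qed

lemma partial_tail:
  fixes \<gamma> :: real and m :: nat
  assumes m: "m \<ge> 1" and g: "\<gamma> > 1"
  shows "(\<gamma>-1) * (\<Sum>j<J. real (j+m+1) powr (-\<gamma>)) \<le> real m powr (1-\<gamma>) - real (m+J) powr (1-\<gamma>)"
proof (induction J)
  case 0 then show ?case by simp
next
  case (Suc J)
  have "(\<gamma>-1) * real (J+m+1) powr (-\<gamma>) \<le> real (m+J) powr (1-\<gamma>) - real (m+Suc J) powr (1-\<gamma>)"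
    using mvt_step[of "real (m+J)" \<gamma>] m g by (simp add: add_ac)
  then show ?case using Suc by (simp add: distrib_left)
qed

lemma tail_bound:
  fixes \<gamma> :: real and m :: nat
  assumes m: "m \<ge> 1" and g: "\<gamma> > 1"
  shows "summable (\<lambda>j. real (j+m) powr (-\<gamma>))"
    "(\<Sum>j. real (j+m) powr (-\<gamma>)) \<le> real m powr (-\<gamma>) + real m powr (1-\<gamma>) / (\<gamma>-1)"
proof -
  have s0: "summable (\<lambda>j. real j powr (-\<gamma>))" using g by (simp add: summable_real_powr_iff)
  show s: "summable (\<lambda>j. real (j+m) powr (-\<gamma>))"
    using summable_iff_shift[of "\<lambda>j. real j powr (-\<gamma>)" m] s0 by simp
  have s1: "summable (\<lambda>j. real (Suc j+m) powr (-\<gamma>))"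
    using summable_iff_shift[of "\<lambda>j. real (j+m) powr (-\<gamma>)" 1] s by simp
  have "(\<Sum>j. real (Suc j+m) powr (-\<gamma>)) = (\<Sum>j. real (j+m) powr (-\<gamma>)) - real m powr (-\<gamma>)"
    using suminf_split_head[OF s] by simp
  moreover have "(\<Sum>j. real (Suc j+m) powr (-\<gamma>)) \<le> real m powr (1-\<gamma>) / (\<gamma>-1)"
  proof (rule suminf_le_const[OF s1])
    fix J
    have "(\<gamma>-1) * (\<Sum>j<J. real (j+m+1) powr (-\<gamma>)) \<le> real m powr (1-\<gamma>)"
    proof -
      have "0 \<le> real (m+J) powr (1-\<gamma>)" by simp
      then show ?thesis using partial_tail[OF m g, of J] by linarith
    qed
    then show "(\<Sum>j<J. real (Suc j+m) powr (-\<gamma>)) \<le> real m powr (1-\<gamma>) / (\<gamma>-1)"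
      using g by (simp add: field_simps add_ac)
  qed
  ultimately show "(\<Sum>j. real (j+m) powr (-\<gamma>)) \<le> real m powr (-\<gamma>) + real m powr (1-\<gamma>) / (\<gamma>-1)"
    by linarith
qed

lemma tail_piece:
  fixes \<beta> n s :: real and N :: nat
  assumes b: "\<beta> \<ge> 1" and n: "n \<ge> 2" and s: "s \<ge> 3/2" and N: "real N + 1 > n powr (1/\<beta>)"
  shows "summable (\<lambda>j. real (j+(N+1)) powr (-(\<beta> * s)))"
    "n powr s * (\<Sum>j. real (j+(N+1)) powr (-(\<beta> * s))) \<le> 1 + 2 * n powr (1/\<beta>)"
proof -
  define E where "E = n powr (1/\<beta>)"
  define \<gamma> where "\<gamma> = \<beta> * s"
  have "1 * s \<le> \<beta> * s" using b s by (intro mult_right_mono) auto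
  then have g: "\<gamma> \<ge> 3/2" unfolding \<gamma>_def using s by linarith
  have E0: "E > 0" unfolding E_def using n by simp
  have Eg: "E powr x = n powr (x/\<beta>)" for x unfolding E_def using b by (simp add: powr_powr)
  have m: "(1::nat) \<le> N+1" by simp
  note tb = tail_bound[OF m, of \<gamma>]
  show "summable (\<lambda>j. real (j+(N+1)) powr (-(\<beta> * s)))" using tb g unfolding \<gamma>_def by simp
  have NE: "E \<le> real (N+1)" using N unfolding E_def by simp
  have a1: "real (N+1) powr (-\<gamma>) \<le> E powr (-\<gamma>)"
    using NE E0 g by (intro powr_mono2') auto
  have a2: "real (N+1) powr (1-\<gamma>) \<le> E powr (1-\<gamma>)"
    using NE E0 g by (intro powr_mono2') auto
  have e1: "n powr s * E powr (-\<gamma>) = 1"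
    using b n unfolding Eg \<gamma>_def by (simp add: powr_minus field_simps)
  have e2: "n powr s * E powr (1-\<gamma>) = E"
  proof -
    have "E powr (1-\<gamma>) = E * E powr (-\<gamma>)" using E0 by (simp add: powr_diff powr_minus field_simps)
    then show ?thesis using e1 by (simp add: algebra_simps)
  qed
  have ns: "n powr s > 0" using n by simp
  have "n powr s * (\<Sum>j. real (j+(N+1)) powr (-\<gamma>)) \<le> n powr s * (real (N+1) powr (-\<gamma>) + real (N+1) powr (1-\<gamma>) / (\<gamma>-1))"
    using tb(2) g ns by (intro mult_left_mono) auto
  also have "\<dots> \<le> n powr s * (E powr (-\<gamma>) + E powr (1-\<gamma>) / (\<gamma>-1))"
    using a1 a2 g ns by (intro mult_left_mono add_mono divide_right_mono) auto
  also have "\<dots> = 1 + E / (\<gamma> - 1)" using e1 e2 by (simp add: distrib_left)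
  also have "\<dots> \<le> 1 + 2 * E"
  proof -
    have "E / (\<gamma>-1) \<le> E / (1/2)" using g E0 by (intro divide_left_mono) auto
    then show ?thesis by simp
  qed
  finally show "n powr s * (\<Sum>j. real (j+(N+1)) powr (-(\<beta> * s))) \<le> 1 + 2 * n powr (1/\<beta>)"
    unfolding \<gamma>_def E_def .
qed

lemma ptwise:
  fixes n u :: real
  assumes n: "n \<ge> 2" and u: "u \<ge> n"
  shows "(n/u)\<^sup>2 * (ln u)\<^sup>2 \<le> 2 * (ln n)\<^sup>2 * (n/u)\<^sup>2 + 32 * (n/u) powr (3/2)"
proof -
  have u0: "u > 0" using n u by simp
  have r1: "u/n \<ge> 1" using n u by simp
  have lu: "ln u = ln n + ln (u/n)" using n u0 by (simp add: ln_div)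
  have l0: "ln (u/n) \<ge> 0" using r1 by simp
  have lb: "ln (u/n) \<le> (u/n) powr (1/4) / (1/4)" by (rule ln_powr_bound[OF r1]) simp
  have "(ln (u/n))\<^sup>2 \<le> ((u/n) powr (1/4) / (1/4))\<^sup>2"
    using l0 lb by (intro power_mono) auto
  also have "\<dots> = 16 * (u/n) powr (1/2)"
    using r1 by (simp add: power2_eq_square powr_add[symmetric])
  finally have l2: "(ln (u/n))\<^sup>2 \<le> 16 * (u/n) powr (1/2)" .
  have "(ln u)\<^sup>2 \<le> 2 * (ln n)\<^sup>2 + 2 * (ln (u/n))\<^sup>2"
    unfolding lu using sum_squares_bound[of "ln n" "ln (u/n)"] by (simp add: power2_eq_square algebra_simps)
  also have "\<dots> \<le> 2 * (ln n)\<^sup>2 + 32 * (u/n) powr (1/2)" using l2 by simp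
  finally have L: "(ln u)\<^sup>2 \<le> 2 * (ln n)\<^sup>2 + 32 * (u/n) powr (1/2)" .
  have q0: "(n/u)\<^sup>2 \<ge> 0" by simp
  have "(n/u)\<^sup>2 * (ln u)\<^sup>2 \<le> (n/u)\<^sup>2 * (2 * (ln n)\<^sup>2 + 32 * (u/n) powr (1/2))"
    using L q0 by (rule mult_left_mono)
  also have "(n/u)\<^sup>2 * (u/n) powr (1/2) = (n/u) powr (3/2)"
  proof -
    have p: "n/u > 0" using n u0 by simp
    have "(u/n) powr (1/2) = (n/u) powr (-1/2)" using p by (simp add: powr_minus_divide powr_divide)
    moreover have "(n/u)\<^sup>2 = (n/u) powr 2" using p by (simp add: powr_numeral)
    moreover have "(n/u) powr 2 * (n/u) powr (-(1/2)) = (n/u) powr (3/2)" unfolding powr_add[symmetric] by simp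
    ultimately show ?thesis by simp
  qed
  then have "(n/u)\<^sup>2 * (2 * (ln n)\<^sup>2 + 32 * (u/n) powr (1/2)) = 2 * (ln n)\<^sup>2 * (n/u)\<^sup>2 + 32 * (n/u) powr (3/2)"
    by (simp add: algebra_simps)
  finally show ?thesis .
qed

lemma summable_shift_powr:
  fixes \<gamma> :: real assumes "\<gamma> > 1"
  shows "summable (\<lambda>k. real (Suc k) powr (-\<gamma>))"
proof -
  have "summable (\<lambda>j. real j powr (-\<gamma>))" using assms by (simp add: summable_real_powr_iff)
  then show ?thesis using summable_iff_shift[of "\<lambda>j. real j powr (-\<gamma>)" 1] by simp
qed

lemma ln_n_sq: "(n::real) \<ge> 2 \<Longrightarrow> (ln n)\<^sup>2 \<ge> 4/9"
proof -
  assume n: "n \<ge> 2"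
  have "ln n \<ge> ln 2" using n by simp
  then have "ln n \<ge> 2/3" using ln2_ge_two_thirds by linarith
  then have "(2/3)\<^sup>2 \<le> (ln n)\<^sup>2" by (intro power_mono) auto
  then show ?thesis by (simp add: power2_eq_square)
qed

lemma sums_lin:
  fixes a b :: "nat \<Rightarrow> real"
  shows "summable a \<Longrightarrow> summable b \<Longrightarrow> (\<Sum>j. D*(c1*(n2*a j) + c2*(n3*b j))) = D*(c1*(n2 * suminf a) + c2*(n3 * suminf b))"
  by (intro sums_unique[symmetric] sums_mult sums_add summable_sums)

lemma part1_sum:
  fixes \<beta> n D :: real and T :: "nat \<Rightarrow> real"
  assumes b: "\<beta> \<ge> 1" and n: "n \<ge> 2" and D: "D \<ge> 0" and T0: "\<And>k. 0 \<le> T k"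
   and Tb1: "\<And>k. T k \<le> D * (ln (real (Suc k) powr \<beta>))\<^sup>2 * (real (Suc k) powr \<beta> / n)\<^sup>2"
   and Tb2: "\<And>k. T k \<le> D * (ln (real (Suc k) powr \<beta>))\<^sup>2 * (n / real (Suc k) powr \<beta>)\<^sup>2"
  shows "summable T" "suminf T \<le> 300 * D * n powr (1/\<beta>) * (ln n)\<^sup>2"
proof -
  define E where "E = n powr (1/\<beta>)"
  have E1: "E \<ge> 1" unfolding E_def using n b by (intro ge_one_powr_ge_zero) auto
  have EB: "E powr \<beta> = n" unfolding E_def using n b by (simp add: powr_powr)
  define N where "N = nat \<lfloor>E\<rfloor>"
  have NE: "real N \<le> E" unfolding N_def using E1 by (simp add: of_nat_nat)
  have EN: "E < real N + 1" unfolding N_def using E1 by (simp add: of_nat_nat)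
  define u where "u = (\<lambda>k. real (Suc k) powr \<beta>)"
  define F where "F = (\<lambda>k. D * (2 * (ln n)\<^sup>2 * (n powr 2 * real (Suc k) powr (-(\<beta> * 2)))
        + 32 * (n powr (3/2) * real (Suc k) powr (-(\<beta> * (3/2))))))"
  have nu_pow: "(n / u k) powr s = n powr s * real (Suc k) powr (-(\<beta> * s))" for k s
    unfolding u_def powr_divide powr_powr powr_minus_divide by simp
  have Fb: "T k \<le> F k" if "k \<ge> N" for k
  proof -
    have "E \<le> real (Suc k)" using EN that by simp
    then have "E powr \<beta> \<le> u k" unfolding u_def using E1 b by (intro powr_mono2) auto
    then have un: "u k \<ge> n" using EB by simp
    have "T k \<le> D * ((n / u k)\<^sup>2 * (ln (u k))\<^sup>2)" using Tb2[of k] unfolding u_def by (simp add: mult_ac)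
    also have "\<dots> \<le> D * (2 * (ln n)\<^sup>2 * (n / u k)\<^sup>2 + 32 * (n / u k) powr (3/2))"
      using ptwise[OF n un] D by (intro mult_left_mono) auto
    also have "(n / u k)\<^sup>2 = (n / u k) powr 2"
      using n un by (simp add: powr_numeral)
    also have "D * (2 * (ln n)\<^sup>2 * (n / u k) powr 2 + 32 * (n / u k) powr (3/2)) = F k"
      unfolding F_def nu_pow by simp
    finally show ?thesis .
  qed
  have sF: "summable F"
    unfolding F_def using b
    by (intro summable_mult summable_add summable_mult summable_shift_powr) auto
  show sT: "summable T"
    by (rule summable_comparison_test'[OF sF, of N]) (use Fb T0 in auto)
  have head: "(\<Sum>k<N. T k) \<le> real N * (D * (ln n)\<^sup>2)"
  proof -
    have "T k \<le> D * (ln n)\<^sup>2" if "k < N" for k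
    proof -
      have "real (Suc k) \<le> E" using NE that by linarith
      then have "u k \<le> E powr \<beta>" unfolding u_def using b by (intro powr_mono2) auto
      then have un: "u k \<le> n" using EB by simp
      have u1: "u k \<ge> 1" unfolding u_def using b by (intro ge_one_powr_ge_zero) auto
      have "0 \<le> ln (u k)" "ln (u k) \<le> ln n" using u1 un by auto
      then have l: "(ln (u k))\<^sup>2 \<le> (ln n)\<^sup>2" by (intro power_mono) auto
      have q: "(u k / n)\<^sup>2 \<le> 1" using un u1 n by (simp add: power_le_one)
      have "T k \<le> D * ((ln (u k))\<^sup>2 * (u k / n)\<^sup>2)" using Tb1[of k] unfolding u_def by (simp add: mult_ac)
      also have "\<dots> \<le> D * ((ln n)\<^sup>2 * 1)"
        using l q D by (intro mult_left_mono mult_mono) auto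
      finally show ?thesis by simp
    qed
    then have "(\<Sum>k<N. T k) \<le> (\<Sum>k<N. D * (ln n)\<^sup>2)" by (intro sum_mono) auto
    then show ?thesis by simp
  qed
  have sF2: "summable (\<lambda>j. real (j+(N+1)) powr (-(\<beta> * 2)))"
    using tail_piece(1)[OF b n _ EN[unfolded E_def], of 2] by simp
  have sF3: "summable (\<lambda>j. real (j+(N+1)) powr (-(\<beta> * (3/2))))"
    using tail_piece(1)[OF b n _ EN[unfolded E_def], of "3/2"] by simp
  have t2: "n powr 2 * (\<Sum>j. real (j+(N+1)) powr (-(\<beta> * 2))) \<le> 1 + 2 * E"
    using tail_piece(2)[OF b n _ EN[unfolded E_def], of 2] unfolding E_def by simp
  have t3: "n powr (3/2) * (\<Sum>j. real (j+(N+1)) powr (-(\<beta> * (3/2)))) \<le> 1 + 2 * E"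
    using tail_piece(2)[OF b n _ EN[unfolded E_def], of "3/2"] unfolding E_def by simp
  have Fe: "(\<lambda>j. F (j + N)) = (\<lambda>j. D * (2 * (ln n)\<^sup>2 * (n powr 2 * real (j+(N+1)) powr (-(\<beta> * 2)))
        + 32 * (n powr (3/2) * real (j+(N+1)) powr (-(\<beta> * (3/2))))))"
    unfolding F_def by (intro ext) (simp add: add_ac)
  have "(\<Sum>j. F (j + N)) = D * (2 * (ln n)\<^sup>2 * (n powr 2 * (\<Sum>j. real (j+(N+1)) powr (-(\<beta> * 2))))
        + 32 * (n powr (3/2) * (\<Sum>j. real (j+(N+1)) powr (-(\<beta> * (3/2))))))"
    unfolding Fe by (rule sums_lin[OF sF2 sF3])
  also have "\<dots> \<le> D * (2 * (ln n)\<^sup>2 * (1 + 2 * E) + 32 * (1 + 2 * E))"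
    using t2 t3 D by (intro mult_left_mono add_mono) auto
  finally have tail: "(\<Sum>j. F (j + N)) \<le> D * (2 * (ln n)\<^sup>2 * (1 + 2 * E) + 32 * (1 + 2 * E))" .
  have "(\<Sum>j. T (j + N)) \<le> (\<Sum>j. F (j + N))"
    using Fb sT sF by (intro suminf_le) (auto simp: summable_iff_shift)
  have "suminf T = (\<Sum>j. T (j + N)) + (\<Sum>k<N. T k)" by (rule suminf_split_initial_segment[OF sT])
  also have "\<dots> \<le> D * (2 * (ln n)\<^sup>2 * (1 + 2 * E) + 32 * (1 + 2 * E)) + real N * (D * (ln n)\<^sup>2)"
    using tail head \<open>(\<Sum>j. T (j + N)) \<le> (\<Sum>j. F (j + N))\<close> by linarith
  also have "\<dots> \<le> D * (2 * (ln n)\<^sup>2 * (3 * E) + 32 * (3 * E)) + E * (D * (ln n)\<^sup>2)"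
    using E1 NE D by (intro add_mono mult_left_mono mult_right_mono) auto
  also have "\<dots> = D * E * (7 * (ln n)\<^sup>2 + 96)" by (simp add: algebra_simps)
  also have "\<dots> \<le> D * E * (300 * (ln n)\<^sup>2)"
    using ln_n_sq[OF n] D E1 by (intro mult_left_mono) auto
  finally show "suminf T \<le> 300 * D * n powr (1/\<beta>) * (ln n)\<^sup>2" unfolding E_def by (simp add: mult_ac)
qed

lemma ratio_bound:
  fixes B u C n :: real
  assumes B: "B > 0" and u1: "u \<ge> 1" and uB: "u \<le> C\<^sup>2 * B" and C: "C \<ge> 1" and n: "n \<ge> 2"
  shows "n * B * ln u / (B+n)\<^sup>2 \<le> (3 * ln C + 3) * ln n"
proof -
  have lnC: "ln C \<ge> 0" using C by simp
  have lnn: "ln n \<ge> 2/3" using n ln2_ge_two_thirds by (smt (verit) ln_le_cancel_iff)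
  have lu0: "ln u \<ge> 0" using u1 by simp
  have "ln u \<le> ln (C\<^sup>2 * B)" using u1 uB by simp
  also have "\<dots> = 2 * ln C + ln B" using C B by (simp add: ln_mult ln_realpow)
  finally have lu: "ln u \<le> 2 * ln C + ln B" .
  have den: "(B+n)\<^sup>2 > 0" using B n by simp
  have main: "n * B * ln u / (B+n)\<^sup>2 \<le> 2 * ln C + ln n + 1"
  proof (cases "B \<le> n")
    case True
    have r: "n * B / (B+n)\<^sup>2 \<le> 1/4"
    proof -
      have "4 * (n * B) \<le> (B+n)\<^sup>2" using sum_squares_bound[of B n]
        by (simp add: power2_eq_square algebra_simps)
      then show ?thesis using den by (simp add: field_simps)
    qed
    have "ln B \<le> ln n" using True B by simp
    then have "ln u \<le> 2 * ln C + ln n" using lu by simp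
    have "n * B * ln u / (B+n)\<^sup>2 = (n * B / (B+n)\<^sup>2) * ln u" by simp
    also have "\<dots> \<le> (1/4) * ln u" using r lu0 by (intro mult_right_mono) auto
    also have "\<dots> \<le> 2 * ln C + ln n + 1" using \<open>ln u \<le> 2 * ln C + ln n\<close> lnC lnn lu0 by linarith
    finally show ?thesis .
  next
    case False
    have r: "n * B / (B+n)\<^sup>2 \<le> n / B"
    proof -
      have "B * B \<le> (B+n)\<^sup>2" using B n by (simp add: power2_eq_square algebra_simps)
      then have "n * B * B \<le> n * (B+n)\<^sup>2" using n by (simp add: mult.assoc mult_left_mono)
      then show ?thesis using den B by (simp add: field_simps)
    qed
    have "ln B = ln n + ln (B/n)" using B n by (simp add: ln_div)
    also have "ln (B/n) \<le> B/n" using B n by (intro ln_bound) simp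
    finally have lB: "ln B \<le> ln n + B/n" by simp
    have nb: "n / B \<le> 1" "n / B \<ge> 0" using False B n by auto
    have "n * B * ln u / (B+n)\<^sup>2 = (n * B / (B+n)\<^sup>2) * ln u" by simp
    also have "\<dots> \<le> (n / B) * ln u" using r lu0 by (intro mult_right_mono) auto
    also have "\<dots> \<le> (n / B) * (2 * ln C + ln n + B/n)" using lu lB nb by (intro mult_left_mono) auto
    also have "\<dots> = (n / B) * (2 * ln C + ln n) + 1" using B n by (simp add: field_simps)
    also have "\<dots> \<le> 1 * (2 * ln C + ln n) + 1"
      using nb lnC lnn by (intro add_mono mult_right_mono) auto
    finally show ?thesis by simp
  qed
  also have "\<dots> \<le> (3 * ln C + 3) * ln n"
  proof -
    have "ln C * 2 \<le> ln C * (3 * ln n)" using lnC lnn by (intro mult_left_mono) auto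
    then have "2 * ln C \<le> 3 * ln C * ln n" by (simp add: mult_ac)
    then show ?thesis using lnn by (simp add: algebra_simps)
  qed
  finally show ?thesis .
qed

lemma kappa_facts:
  fixes C p \<alpha> i k :: real
  assumes C: "C \<ge> 1" and p: "p \<ge> 0" and a: "\<alpha> > 0" and i: "i \<ge> 1"
    and kl: "(1 / C) * i powr (-p) \<le> k" and ku: "k \<le> C * i powr (-p)"
  shows "k > 0" "i powr (1+2*\<alpha>) * k powr (-2) * k\<^sup>2 = i powr (1+2*\<alpha>)"
    "i powr (1+2*\<alpha>+2*p) \<le> C\<^sup>2 * (i powr (1+2*\<alpha>) * k powr (-2))"
    "i powr (1+2*\<alpha>) * k powr (-2) \<le> C\<^sup>2 * i powr (1+2*\<alpha>+2*p)"
    "i powr (1+2*\<alpha>+2*p) \<ge> 1" "i powr (1+2*\<alpha>) * k powr (-2) > 0"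
    "k\<^sup>2 \<le> C\<^sup>2" "i powr (1+2*\<alpha>+2*p) \<ge> i powr (1+2*\<alpha>)"
proof -
  have ip: "i powr (-p) > 0" using i by simp
  show k0: "k > 0" using kl ip C by (smt (verit) divide_pos_pos mult_pos_pos)
  have kp: "k powr (-2) = 1 / k\<^sup>2" using k0 by (simp add: powr_minus_divide powr_numeral)
  show "i powr (1+2*\<alpha>) * k powr (-2) * k\<^sup>2 = i powr (1+2*\<alpha>)" using k0 kp by simp
  have split: "i powr (1+2*\<alpha>+2*p) = i powr (1+2*\<alpha>) * i powr (2*p)" by (simp add: powr_add)
  have i2p: "i powr (2*p) * (i powr (-p))\<^sup>2 = 1" using i
    by (simp add: power2_eq_square powr_add[symmetric])
  have kl2: "(1/C * i powr (-p))\<^sup>2 \<le> k\<^sup>2" using kl ip C by (intro power_mono) auto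
  have ku2: "k\<^sup>2 \<le> (C * i powr (-p))\<^sup>2" using ku ip C k0 by (intro power_mono) auto
  have ipos: "i powr (1+2*\<alpha>) > 0" using i by simp
  have i2pos: "i powr (2*p) > 0" using i by simp
  show "i powr (1+2*\<alpha>+2*p) \<le> C\<^sup>2 * (i powr (1+2*\<alpha>) * k powr (-2))"
  proof -
    have "i powr (2*p) * k\<^sup>2 \<le> i powr (2*p) * (C * i powr (-p))\<^sup>2" using ku2 i2pos by simp
    also have "\<dots> = C\<^sup>2" using i2p by (simp add: power_mult_distrib)
    finally have "i powr (2*p) \<le> C\<^sup>2 / k\<^sup>2" using k0 by (simp add: field_simps)
    then have "i powr (1+2*\<alpha>) * i powr (2*p) \<le> i powr (1+2*\<alpha>) * (C\<^sup>2 / k\<^sup>2)" using ipos by (intro mult_left_mono) auto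
    then show ?thesis unfolding split kp by (simp add: mult_ac)
  qed
  show "i powr (1+2*\<alpha>) * k powr (-2) \<le> C\<^sup>2 * i powr (1+2*\<alpha>+2*p)"
  proof -
    have "1 = i powr (2*p) * (1/C * i powr (-p))\<^sup>2 * C\<^sup>2" using i2p C by (simp add: power_mult_distrib field_simps)
    also have "\<dots> \<le> i powr (2*p) * k\<^sup>2 * C\<^sup>2" using kl2 i2pos by (intro mult_right_mono mult_left_mono) auto
    finally have "1 / k\<^sup>2 \<le> C\<^sup>2 * i powr (2*p)" using k0 by (simp add: field_simps)
    then have "i powr (1+2*\<alpha>) * (1 / k\<^sup>2) \<le> i powr (1+2*\<alpha>) * (C\<^sup>2 * i powr (2*p))" using ipos by (intro mult_left_mono) auto
    then show ?thesis unfolding split kp by (simp add: mult_ac)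
  qed
  show "i powr (1+2*\<alpha>+2*p) \<ge> 1" using i a p by (intro ge_one_powr_ge_zero) auto
  show "i powr (1+2*\<alpha>) * k powr (-2) > 0" using ipos k0 by simp
  show "k\<^sup>2 \<le> C\<^sup>2"
  proof -
    have "1 \<le> i powr p" using i p by (intro ge_one_powr_ge_zero) auto
    then have "i powr (-p) \<le> 1" by (simp add: powr_minus_divide divide_le_eq)
    then have "C * i powr (-p) \<le> C" using C by (simp add: mult_left_le)
    then have "k \<le> C" using ku by simp
    then show ?thesis using k0 by (intro power_mono) auto
  qed
  show "i powr (1+2*\<alpha>+2*p) \<ge> i powr (1+2*\<alpha>)" using i p by (intro powr_mono) auto
qed

lemma T_bounds:
  fixes B u n C :: real
  assumes B: "B > 0" and u: "u > 0" and n: "n > 0" and uB: "u \<le> C\<^sup>2 * B" and Bu: "B \<le> C\<^sup>2 * u" and C: "C \<ge> 1"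
  shows "n\<^sup>2 * B\<^sup>2 / (B+n)^4 \<le> C^4 * (u/n)\<^sup>2" "n\<^sup>2 * B\<^sup>2 / (B+n)^4 \<le> C^4 * (n/u)\<^sup>2"
proof -
  have d1: "(B+n)^4 \<ge> n^4" using B n by (intro power_mono) auto
  have d2: "(B+n)^4 \<ge> B^4" using B n by (intro power_mono) auto
  have "n\<^sup>2 * B\<^sup>2 / (B+n)^4 \<le> n\<^sup>2 * B\<^sup>2 / n^4" using d1 B n by (intro divide_left_mono) auto
  also have "\<dots> = (B/n)\<^sup>2" using n by (simp add: power2_eq_square power4_eq_xxxx field_simps)
  also have "\<dots> \<le> (C\<^sup>2 * u / n)\<^sup>2" using Bu B n by (intro power_mono divide_right_mono) auto
  also have "\<dots> = C^4 * (u/n)\<^sup>2" by (simp add: power2_eq_square power4_eq_xxxx field_simps)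
  finally show "n\<^sup>2 * B\<^sup>2 / (B+n)^4 \<le> C^4 * (u/n)\<^sup>2" .
  have "n\<^sup>2 * B\<^sup>2 / (B+n)^4 \<le> n\<^sup>2 * B\<^sup>2 / B^4" using d2 B n by (intro divide_left_mono) auto
  also have "\<dots> = (n/B)\<^sup>2" using B by (simp add: power2_eq_square power4_eq_xxxx field_simps)
  also have "\<dots> \<le> (n / (u / C\<^sup>2))\<^sup>2"
  proof -
    have "u / C\<^sup>2 \<le> B" using uB C by (simp add: field_simps)
    moreover have "u / C\<^sup>2 > 0" using u C by simp
    ultimately show ?thesis using n B u C by (intro power_mono divide_left_mono) auto
  qed
  also have "\<dots> = C^4 * (n/u)\<^sup>2" using C by (simp add: power2_eq_square power4_eq_xxxx field_simps)
  finally show "n\<^sup>2 * B\<^sup>2 / (B+n)^4 \<le> C^4 * (n/u)\<^sup>2" .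
qed

lemma perk:
  fixes C p \<alpha> i k \<mu> nn :: real
  assumes C: "C \<ge> 1" and p: "p \<ge> 0" and a: "\<alpha> > 0" and i: "i \<ge> 1" and n: "nn \<ge> 2"
    and kl: "(1 / C) * i powr (-p) \<le> k" and ku: "k \<le> C * i powr (-p)"
  defines "w \<equiv> nn\<^sup>2 * i powr (1+2*\<alpha>) * k powr (-2) * ln i / (i powr (1+2*\<alpha>) * k powr (-2) + nn)\<^sup>2"
    and "h \<equiv> nn\<^sup>2 * i powr (1+2*\<alpha>) * \<mu>\<^sup>2 * ln i / (i powr (1+2*\<alpha>) * k powr (-2) + nn)\<^sup>2"
    and "u \<equiv> i powr (1+2*\<alpha>+2*p)"
  shows "w \<ge> 0" "h \<ge> 0" "w * (k * \<mu>)\<^sup>2 = h"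
    "w\<^sup>2 / nn\<^sup>2 \<le> (C^4 / (1+2*\<alpha>+2*p)\<^sup>2) * (ln u)\<^sup>2 * (u / nn)\<^sup>2"
    "w\<^sup>2 / nn\<^sup>2 \<le> (C^4 / (1+2*\<alpha>+2*p)\<^sup>2) * (ln u)\<^sup>2 * (nn / u)\<^sup>2"
    "(1+2*\<alpha>+2*p) * (w\<^sup>2 * (4 * (k * \<mu>)\<^sup>2 / nn)) \<le> 4 * (3 * ln C + 3) * ln nn * h"
    "h \<le> nn\<^sup>2 * C^4 * \<mu>\<^sup>2"
    "w / nn \<le> (nn * C\<^sup>2 / \<alpha>) * i powr (-(1+\<alpha>))"
proof -
  define B where "B = i powr (1+2*\<alpha>) * k powr (-2)"
  define L where "L = ln i"
  define \<beta> where "\<beta> = 1+2*\<alpha>+2*p"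
  note kf = kappa_facts[OF C p a i kl ku]
  have k0: "k > 0" by (rule kf(1))
  have Bk: "B * k\<^sup>2 = i powr (1+2*\<alpha>)" unfolding B_def by (rule kf(2))
  have uB: "u \<le> C\<^sup>2 * B" unfolding B_def u_def by (rule kf(3))
  have Bu: "B \<le> C\<^sup>2 * u" unfolding B_def u_def by (rule kf(4))
  have u1: "u \<ge> 1" unfolding u_def by (rule kf(5))
  have B0: "B > 0" unfolding B_def by (rule kf(6))
  have kC: "k\<^sup>2 \<le> C\<^sup>2" by (rule kf(7))
  have ui: "u \<ge> i powr (1+2*\<alpha>)" unfolding u_def by (rule kf(8))
  have L0: "L \<ge> 0" unfolding L_def using i by simp
  have b1: "\<beta> \<ge> 1" unfolding \<beta>_def using a p by simp
  have lnu: "ln u = \<beta> * L" unfolding u_def \<beta>_def L_def using i by simp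
  have n0: "nn > 0" using n by simp
  have den: "(B + nn)\<^sup>2 > 0" using B0 n0 by simp
  have we: "w = nn\<^sup>2 * B * L / (B + nn)\<^sup>2" unfolding w_def B_def L_def by (simp add: mult_ac)
  have he: "h = nn\<^sup>2 * (B * k\<^sup>2) * \<mu>\<^sup>2 * L / (B + nn)\<^sup>2" unfolding h_def Bk unfolding B_def L_def by simp
  show w0: "w \<ge> 0" unfolding we using B0 L0 by simp
  show h0: "h \<ge> 0" unfolding he using B0 L0 by simp
  show "w * (k * \<mu>)\<^sup>2 = h" unfolding we he by (simp add: power_mult_distrib field_simps)
  have Te: "w\<^sup>2 / nn\<^sup>2 = (nn\<^sup>2 * B\<^sup>2 / (B+nn)^4) * (ln u)\<^sup>2 / \<beta>\<^sup>2"
  proof -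
    have Le: "L = ln u / \<beta>" using lnu b1 by simp
    show ?thesis unfolding we Le using b1 n0 B0
      by (simp add: power_divide power_mult_distrib field_simps flip: power_mult)
  qed
  have u0: "u > 0" using u1 by simp
  note tb = T_bounds[OF B0 u0 n0 uB Bu C]
  have lq: "(ln u)\<^sup>2 / \<beta>\<^sup>2 \<ge> 0" by simp
  show "w\<^sup>2 / nn\<^sup>2 \<le> (C^4 / (1+2*\<alpha>+2*p)\<^sup>2) * (ln u)\<^sup>2 * (u / nn)\<^sup>2"
  proof -
    have "(nn\<^sup>2 * B\<^sup>2 / (B+nn)^4) * ((ln u)\<^sup>2 / \<beta>\<^sup>2) \<le> C^4 * (u/nn)\<^sup>2 * ((ln u)\<^sup>2 / \<beta>\<^sup>2)"
      by (rule mult_right_mono[OF tb(1) lq])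
    then have "w\<^sup>2 / nn\<^sup>2 \<le> C^4 * (u/nn)\<^sup>2 * ((ln u)\<^sup>2 / \<beta>\<^sup>2)" unfolding Te by simp
    then show ?thesis unfolding \<beta>_def by (simp add: field_simps)
  qed
  show "w\<^sup>2 / nn\<^sup>2 \<le> (C^4 / (1+2*\<alpha>+2*p)\<^sup>2) * (ln u)\<^sup>2 * (nn / u)\<^sup>2"
  proof -
    have "(nn\<^sup>2 * B\<^sup>2 / (B+nn)^4) * ((ln u)\<^sup>2 / \<beta>\<^sup>2) \<le> C^4 * (nn/u)\<^sup>2 * ((ln u)\<^sup>2 / \<beta>\<^sup>2)"
      by (rule mult_right_mono[OF tb(2) lq])
    then have "w\<^sup>2 / nn\<^sup>2 \<le> C^4 * (nn/u)\<^sup>2 * ((ln u)\<^sup>2 / \<beta>\<^sup>2)" unfolding Te by simp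
    then show ?thesis unfolding \<beta>_def by (simp add: field_simps)
  qed
  have R: "nn * B * ln u / (B+nn)\<^sup>2 \<le> (3 * ln C + 3) * ln nn"
    by (rule ratio_bound[OF B0 u1 uB C n])
  have V2e: "\<beta> * (w\<^sup>2 * (4 * (k * \<mu>)\<^sup>2 / nn)) = 4 * (nn * B * ln u / (B+nn)\<^sup>2) * h"
    unfolding we he lnu using n0 den by (simp add: power2_eq_square field_simps)
  show "(1+2*\<alpha>+2*p) * (w\<^sup>2 * (4 * (k * \<mu>)\<^sup>2 / nn)) \<le> 4 * (3 * ln C + 3) * ln nn * h"
  proof -
    have "4 * (nn * B * ln u / (B+nn)\<^sup>2) * h \<le> 4 * ((3 * ln C + 3) * ln nn) * h"
      using R h0 by (intro mult_right_mono mult_left_mono) auto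
    then show ?thesis unfolding \<beta>_def[symmetric] V2e by (simp only: mult.assoc)
  qed
  have iB: "i / C\<^sup>2 \<le> B"
  proof -
    have "i powr 1 \<le> i powr (1+2*\<alpha>)" using i a by (intro powr_mono) auto
    then have "i \<le> u" using ui i by simp
    then show ?thesis using uB C by (simp add: field_simps)
  qed
  have LB: "L / B \<le> C\<^sup>2"
  proof -
    have Li: "L \<le> i" unfolding L_def using i ln_bound[of i] by simp
    have "L / B \<le> L / (i / C\<^sup>2)" using iB L0 i C B0 by (intro divide_left_mono) auto
    also have "\<dots> = C\<^sup>2 * (L / i)" using i by simp
    also have "\<dots> \<le> C\<^sup>2 * 1" using Li i L0 by (intro mult_left_mono) auto
    finally show ?thesis by simp
  qed
  show "h \<le> nn\<^sup>2 * C^4 * \<mu>\<^sup>2"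
  proof -
    have "h \<le> nn\<^sup>2 * (B * k\<^sup>2) * \<mu>\<^sup>2 * L / B\<^sup>2"
      unfolding he using B0 L0 n0 by (intro divide_left_mono) (auto intro!: mult_nonneg_nonneg mult_mono simp: power2_eq_square)
    also have "\<dots> = nn\<^sup>2 * \<mu>\<^sup>2 * (k\<^sup>2 * (L / B))" using B0 by (simp add: power2_eq_square field_simps)
    also have "\<dots> \<le> nn\<^sup>2 * \<mu>\<^sup>2 * (C\<^sup>2 * C\<^sup>2)"
      using kC LB L0 B0 by (intro mult_left_mono mult_mono) auto
    finally show ?thesis by (simp add: power2_eq_square power4_eq_xxxx mult_ac)
  qed
  show "w / nn \<le> (nn * C\<^sup>2 / \<alpha>) * i powr (-(1+\<alpha>))"
  proof -
    have "w / nn = nn * B * L / (B + nn)\<^sup>2" unfolding we using n0 by (simp add: power2_eq_square)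
    also have "\<dots> \<le> nn * B * L / B\<^sup>2" using B0 L0 n0 by (intro divide_left_mono) (auto intro!: mult_mono simp: power2_eq_square)
    also have "\<dots> = nn * (L / B)" using B0 by (simp add: power2_eq_square)
    also have "\<dots> \<le> nn * (C\<^sup>2 * L / u)"
    proof -
      have "u / C\<^sup>2 \<le> B" using uB C by (simp add: field_simps)
      then have "L / B \<le> L / (u / C\<^sup>2)" using L0 u0 C B0 by (intro divide_left_mono) auto
      then show ?thesis using n0 C by (intro mult_left_mono) (auto simp: field_simps)
    qed
    also have "\<dots> \<le> nn * (C\<^sup>2 * L / i powr (1+2*\<alpha>))"
      using ui L0 n0 C i u0 by (intro mult_left_mono divide_left_mono) auto
    also have "\<dots> \<le> nn * (C\<^sup>2 * (i powr \<alpha> / \<alpha>) / i powr (1+2*\<alpha>))"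
      using ln_powr_bound[OF i a] n0 C i unfolding L_def by (intro mult_left_mono divide_right_mono) auto
    also have "\<dots> = (nn * C\<^sup>2 / \<alpha>) * (i powr \<alpha> / i powr (1+2*\<alpha>))" by simp
    also have "i powr \<alpha> / i powr (1+2*\<alpha>) = i powr (-(1+\<alpha>))"
    proof -
      have "- \<alpha> - 1 = - 1 - \<alpha>" by simp
      have "i powr \<alpha> / i powr (1+2*\<alpha>) = i powr (\<alpha> - (1+2*\<alpha>))" by (simp only: powr_diff)
      also have "\<alpha> - (1+2*\<alpha>) = -(1+\<alpha>)" by simp
      finally show ?thesis .
    qed
    finally show ?thesis .
  qed
qed

theorem lemma5p2:
  fixes \<kappa> :: "nat \<Rightarrow> real" and p C :: real
  assumes p: "p \<ge> 0" and C: "C \<ge> 1"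
    and \<kappa>_bounds: "\<And>i. i \<ge> 1 \<Longrightarrow>
         (1 / C) * real i powr (-p) \<le> \<kappa> i \<and> \<kappa> i \<le> C * real i powr (-p)"
  shows "\<exists>K>0. \<forall>(M :: 'a measure) (Z :: nat \<Rightarrow> 'a \<Rightarrow> real) (\<mu>0 :: nat \<Rightarrow> real) (\<alpha>::real) (n::nat).
     prob_space M
     \<longrightarrow> prob_space.indep_vars M (\<lambda>_. borel) Z {1..}
     \<longrightarrow> (\<forall>i\<ge>1. distributed M lborel (Z i) std_normal_density)
     \<longrightarrow> summable (\<lambda>k. (\<mu>0 (Suc k))\<^sup>2)
     \<longrightarrow> \<alpha> > 0 \<longrightarrow> n \<ge> 2
     \<longrightarrow> (let X = (\<lambda>\<omega>. (1 + 2*\<alpha> + 2*p) * Mn \<kappa> n \<alpha> (\<lambda>i. Yobs \<kappa> \<mu>0 n Z i \<omega>)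
                        / real n powr (1 / (1 + 2*\<alpha> + 2*p)))
         in (\<integral>\<omega>. (X \<omega> - (\<integral>\<omega>'. X \<omega>' \<partial>M))\<^sup>2 \<partial>M))
        \<le> K * (real n powr (-1 / (1 + 2*\<alpha> + 2*p)) * (ln (real n))\<^sup>2 * (1 + hn \<kappa> p \<mu>0 n \<alpha>))"
proof -
  define K3 where "K3 = 3 * ln C + 3"
  define K where "K = 600 * C^4 + 4 * K3"
  have lnC: "ln C \<ge> 0" using C by simp
  have K3p: "K3 > 0" unfolding K3_def using lnC by simp
  have Kp: "K > 0" unfolding K_def using K3p C by (simp add: add_pos_nonneg)
  show ?thesis
  proof (intro exI[of _ K] conjI Kp allI impI)
    fix M :: "'a measure" and Z :: "nat \<Rightarrow> 'a \<Rightarrow> real" and \<mu>0 :: "nat \<Rightarrow> real" and \<alpha> :: real and n :: nat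
    assume M: "prob_space M" and ind: "prob_space.indep_vars M (\<lambda>_. borel) Z {1..}"
      and dist: "\<forall>i\<ge>1. distributed M lborel (Z i) std_normal_density"
      and s\<mu>: "summable (\<lambda>k. (\<mu>0 (Suc k))\<^sup>2)" and a: "\<alpha> > 0" and n2: "n \<ge> 2"
    define \<beta> where "\<beta> = 1 + 2*\<alpha> + 2*p"
    define nn where "nn = real n"
    define E where "E = nn powr (1/\<beta>)"
    have b1: "\<beta> \<ge> 1" unfolding \<beta>_def using a p by simp
    have nn2: "nn \<ge> 2" unfolding nn_def using n2 by simp
    have nn0: "nn > 0" using nn2 by simp
    have E0: "E > 0" unfolding E_def using nn0 by simp
    have lnn: "ln nn > 0" using nn2 by simp
    define w where "w k = nn\<^sup>2 * real (Suc k) powr (1+2*\<alpha>) * \<kappa> (Suc k) powr (-2) * ln (real (Suc k))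
         / (real (Suc k) powr (1+2*\<alpha>) * \<kappa> (Suc k) powr (-2) + nn)\<^sup>2" for k
    define h where "h k = nn\<^sup>2 * real (Suc k) powr (1+2*\<alpha>) * (\<mu>0 (Suc k))\<^sup>2 * ln (real (Suc k))
         / (real (Suc k) powr (1+2*\<alpha>) * \<kappa> (Suc k) powr (-2) + nn)\<^sup>2" for k
    define ak where "ak k = \<kappa> (Suc k) * \<mu>0 (Suc k)" for k
    define u where "u k = real (Suc k) powr (1+2*\<alpha>+2*p)" for k
    define T where "T k = (w k)\<^sup>2 / nn\<^sup>2" for k
    define V2 where "V2 k = (w k)\<^sup>2 * (4 * (ak k)\<^sup>2 / nn)" for k
    define t where "t = sqrt nn"
    have t0: "t \<noteq> 0" unfolding t_def using nn0 by simp
    have t2: "t\<^sup>2 = nn" unfolding t_def using nn0 by simp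
    have "t^4 = (t\<^sup>2)\<^sup>2" by (simp flip: power_mult)
    then have t4: "t^4 = nn\<^sup>2" using t2 by simp
    have kb: "(1 / C) * real (Suc k) powr (-p) \<le> \<kappa> (Suc k)" "\<kappa> (Suc k) \<le> C * real (Suc k) powr (-p)" for k
      using \<kappa>_bounds[of "Suc k"] by auto
    have i1: "real (Suc k) \<ge> 1" for k by simp
    note pk = perk[OF C p a i1 nn2 kb(1) kb(2)]
    have w0: "w k \<ge> 0" for k unfolding w_def using pk(1) by simp
    have h0: "h k \<ge> 0" for k unfolding h_def using pk(2) by simp
    have wa: "w k * (ak k)\<^sup>2 = h k" for k unfolding w_def h_def ak_def using pk(3) by simp
    have T1: "T k \<le> (C^4 / \<beta>\<^sup>2) * (ln (real (Suc k) powr \<beta>))\<^sup>2 * (real (Suc k) powr \<beta> / nn)\<^sup>2" for k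
      unfolding T_def w_def \<beta>_def using pk(4) by simp
    have T2: "T k \<le> (C^4 / \<beta>\<^sup>2) * (ln (real (Suc k) powr \<beta>))\<^sup>2 * (nn / real (Suc k) powr \<beta>)\<^sup>2" for k
      unfolding T_def w_def \<beta>_def using pk(5) by simp
    have T0: "T k \<ge> 0" for k unfolding T_def by simp
    have V2b: "\<beta> * V2 k \<le> 4 * K3 * ln nn * h k" for k
      unfolding V2_def \<beta>_def K3_def w_def h_def ak_def using pk(6) by simp
    have hb: "h k \<le> nn\<^sup>2 * C^4 * (\<mu>0 (Suc k))\<^sup>2" for k unfolding h_def using pk(7) by simp
    have wb: "w k / nn \<le> (nn * C\<^sup>2 / \<alpha>) * real (Suc k) powr (-(1+\<alpha>))" for k
      unfolding w_def using pk(8) by simp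
    have D0: "C^4 / \<beta>\<^sup>2 \<ge> 0" by simp
    note P1 = part1_sum[OF b1 nn2 D0 T0 T1 T2]
    have sh: "summable h"
      by (rule summable_comparison_test'[of "\<lambda>k. nn\<^sup>2 * C^4 * (\<mu>0 (Suc k))\<^sup>2" 0])
         (use s\<mu> hb h0 in \<open>auto intro: summable_mult\<close>)
    have sw: "summable (\<lambda>k. w k / nn)"
    proof (rule summable_comparison_test'[of "\<lambda>k. (nn * C\<^sup>2 / \<alpha>) * real (Suc k) powr (-(1+\<alpha>))" 0])
      show "summable (\<lambda>k. (nn * C\<^sup>2 / \<alpha>) * real (Suc k) powr (-(1+\<alpha>)))"
        using a by (intro summable_mult summable_shift_powr) simp
      show "norm (w k / nn) \<le> (nn * C\<^sup>2 / \<alpha>) * real (Suc k) powr (-(1+\<alpha>))" for k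
        using wb[of k] w0[of k] nn0 by simp
    qed
    have s1: "summable (\<lambda>k. w k * ((ak k)\<^sup>2 + 1/t\<^sup>2))"
    proof -
      have "(\<lambda>k. w k * ((ak k)\<^sup>2 + 1/t\<^sup>2)) = (\<lambda>k. h k + w k / nn)"
        using wa t2 by (auto simp: algebra_simps)
      then show ?thesis using sh sw by (simp add: summable_add)
    qed
    have sV2: "summable V2"
    proof (rule summable_comparison_test'[of "\<lambda>k. (4 * K3 * ln nn / \<beta>) * h k" 0])
      show "summable (\<lambda>k. (4 * K3 * ln nn / \<beta>) * h k)" using sh by (rule summable_mult)
      fix k
      have "V2 k \<ge> 0" unfolding V2_def using nn0 by simp
      moreover have "V2 k \<le> (4 * K3 * ln nn / \<beta>) * h k" using V2b[of k] b1 by (simp add: field_simps)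
      ultimately show "norm (V2 k) \<le> (4 * K3 * ln nn / \<beta>) * h k" by simp
    qed
    have ve: "(\<lambda>k. (w k)\<^sup>2 * (4*(ak k)\<^sup>2/t\<^sup>2 + 2/t^4)) = (\<lambda>k. V2 k + 2 * T k)"
      unfolding V2_def T_def t2 t4 by (auto simp: algebra_simps)
    have s2: "summable (\<lambda>k. (w k)\<^sup>2 * (4*(ak k)\<^sup>2/t\<^sup>2 + 2/t^4))"
      unfolding ve using sV2 P1(1) by (intro summable_add summable_mult)
    have sumv: "(\<Sum>k. (w k)\<^sup>2 * (4*(ak k)\<^sup>2/t\<^sup>2 + 2/t^4)) = (\<Sum>k. V2 k) + 2 * (\<Sum>k. T k)"
      unfolding ve using sV2 P1(1) by (simp add: suminf_add[symmetric] suminf_mult summable_mult)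
    define S1 where "S1 = (\<Sum>k. let i = real (Suc k) in
        real n * ln i / (i powr (1 + 2*\<alpha>) * \<kappa> (Suc k) powr (-2) + real n))"
    define V where "V \<omega> = (\<Sum>k. w k * (ak k + Z (Suc k) \<omega> / t)\<^sup>2)" for \<omega>
    define X where "X \<omega> = (1 + 2*\<alpha> + 2*p) * Mn \<kappa> n \<alpha> (\<lambda>i. Yobs \<kappa> \<mu>0 n Z i \<omega>)
                        / real n powr (1 / (1 + 2*\<alpha> + 2*p))" for \<omega>
    have Xe: "X \<omega> = \<beta> * (S1 - V \<omega>) / E" for \<omega>
      unfolding X_def Mn_def Yobs_def S1_def V_def w_def ak_def t_def \<beta>_def E_def nn_def Let_def
      by simp
    have Zm[measurable]: "Z (Suc k) \<in> borel_measurable M" for k using dist Zmeas by auto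
    have Vm[measurable]: "V \<in> borel_measurable M" unfolding V_def by measurable
    have Xm: "X \<in> borel_measurable M" unfolding Xe[abs_def] by measurable
    define Sm where "Sm = (\<Sum>k. w k * ((ak k)\<^sup>2 + 1/t\<^sup>2))"
    define d where "d = \<beta> * (S1 - Sm) / E"
    have XD: "(X \<omega> - d)\<^sup>2 = (\<beta> / E)\<^sup>2 * (V \<omega> - Sm)\<^sup>2" for \<omega>
    proof -
      have "X \<omega> - d = -(\<beta>/E) * (V \<omega> - Sm)" unfolding Xe d_def using E0 by (simp add: field_simps)
      then show ?thesis by (simp add: power_mult_distrib power_divide)
    qed
    have "(\<integral>\<omega>. (X \<omega> - (\<integral>\<omega>'. X \<omega>' \<partial>M))\<^sup>2 \<partial>M) \<le> (\<integral>\<omega>. (X \<omega> - d)\<^sup>2 \<partial>M)"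
      by (rule var_le[OF M Xm])
    also have "\<dots> = (\<beta> / E)\<^sup>2 * (\<integral>\<omega>. (V \<omega> - Sm)\<^sup>2 \<partial>M)"
      unfolding XD by simp
    also have "\<dots> \<le> (\<beta> / E)\<^sup>2 * (\<Sum>k. (w k)\<^sup>2 * (4*(ak k)\<^sup>2/t\<^sup>2 + 2/t^4))"
      unfolding V_def Sm_def using main_prob[OF M ind dist t0 w0 s1 s2] by (intro mult_left_mono) auto
    also have "\<dots> = (\<beta> / E)\<^sup>2 * (\<Sum>k. V2 k) + 2 * (\<beta> / E)\<^sup>2 * (\<Sum>k. T k)"
      unfolding sumv by (simp add: algebra_simps)
    also have "\<dots> \<le> (\<beta> / E\<^sup>2) * (4 * K3 * ln nn * (\<Sum>k. h k)) + 600 * C^4 * (ln nn)\<^sup>2 / E"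
    proof (rule add_mono)
      have "(\<Sum>k. \<beta> * V2 k) \<le> (\<Sum>k. 4 * K3 * ln nn * h k)"
        using V2b sV2 sh by (intro suminf_le) (auto intro: summable_mult)
      then have "\<beta> * (\<Sum>k. V2 k) \<le> 4 * K3 * ln nn * (\<Sum>k. h k)"
        using sV2 sh by (simp add: suminf_mult)
      then have "(\<beta> / E\<^sup>2) * (\<beta> * (\<Sum>k. V2 k)) \<le> (\<beta> / E\<^sup>2) * (4 * K3 * ln nn * (\<Sum>k. h k))"
        using b1 E0 by (intro mult_left_mono) auto
      then show "(\<beta> / E)\<^sup>2 * (\<Sum>k. V2 k) \<le> (\<beta> / E\<^sup>2) * (4 * K3 * ln nn * (\<Sum>k. h k))"
        by (simp add: power2_eq_square field_simps)
    next
      have "2 * (\<beta> / E)\<^sup>2 * (\<Sum>k. T k) \<le> 2 * (\<beta> / E)\<^sup>2 * (300 * (C^4 / \<beta>\<^sup>2) * E * (ln nn)\<^sup>2)"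
        using P1(2) unfolding E_def by (intro mult_left_mono) auto
      also have "\<dots> = 600 * C^4 * (ln nn)\<^sup>2 / E" using b1 E0 by (simp add: power2_eq_square field_simps)
      finally show "2 * (\<beta> / E)\<^sup>2 * (\<Sum>k. T k) \<le> 600 * C^4 * (ln nn)\<^sup>2 / E" .
    qed
    also have "\<dots> \<le> K * (nn powr (-1/\<beta>) * (ln nn)\<^sup>2 * (1 + hn \<kappa> p \<mu>0 n \<alpha>))"
    proof -
      have hne: "hn \<kappa> p \<mu>0 n \<alpha> = \<beta> / (E * ln nn) * (\<Sum>k. h k)"
        unfolding hn_def h_def \<beta>_def E_def nn_def Let_def by simp
      have Einv: "nn powr (-1/\<beta>) = 1 / E" unfolding E_def
        by (simp add: powr_minus_divide[symmetric])
      have Sh0: "(\<Sum>k. h k) \<ge> 0" using sh h0 by (simp add: suminf_nonneg)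
      have "K * (nn powr (-1/\<beta>) * (ln nn)\<^sup>2 * (1 + hn \<kappa> p \<mu>0 n \<alpha>))
          = K * (ln nn)\<^sup>2 / E + (\<beta> / E\<^sup>2) * (K * ln nn * (\<Sum>k. h k))"
        unfolding hne Einv using E0 lnn by (simp add: power2_eq_square field_simps)
      moreover have "600 * C^4 * (ln nn)\<^sup>2 / E \<le> K * (ln nn)\<^sup>2 / E"
        using E0 K3p unfolding K_def by (intro divide_right_mono mult_right_mono) auto
      moreover have "(\<beta> / E\<^sup>2) * (4 * K3 * ln nn * (\<Sum>k. h k)) \<le> (\<beta> / E\<^sup>2) * (K * ln nn * (\<Sum>k. h k))"
        using b1 E0 lnn Sh0 C unfolding K_def
        by (intro mult_left_mono mult_right_mono) auto
      ultimately show ?thesis by linarith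
    qed
    finally have fin: "(\<integral>\<omega>. (X \<omega> - (\<integral>\<omega>'. X \<omega>' \<partial>M))\<^sup>2 \<partial>M) \<le> K * (nn powr (-1/\<beta>) * (ln nn)\<^sup>2 * (1 + hn \<kappa> p \<mu>0 n \<alpha>))" .
    have Xeq: "(\<lambda>\<omega>. (1 + 2*\<alpha> + 2*p) * Mn \<kappa> n \<alpha> (\<lambda>i. Yobs \<kappa> \<mu>0 n Z i \<omega>)
                        / real n powr (1 / (1 + 2*\<alpha> + 2*p))) = X"
      by (rule ext) (simp only: X_def)
    show "(let X = (\<lambda>\<omega>. (1 + 2*\<alpha> + 2*p) * Mn \<kappa> n \<alpha> (\<lambda>i. Yobs \<kappa> \<mu>0 n Z i \<omega>)
                        / real n powr (1 / (1 + 2*\<alpha> + 2*p)))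
         in (\<integral>\<omega>. (X \<omega> - (\<integral>\<omega>'. X \<omega>' \<partial>M))\<^sup>2 \<partial>M))
        \<le> K * (real n powr (-1 / (1 + 2*\<alpha> + 2*p)) * (ln (real n))\<^sup>2 * (1 + hn \<kappa> p \<mu>0 n \<alpha>))"
      unfolding Let_def Xeq using fin unfolding \<beta>_def nn_def .
  qed
qed

end
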